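(* Let $k\ge 1$ and $\rho\ge 0$ be integers. Every connected graph $G=(V,E)$ with at least $k$ vertices and $\mathrm{tb}_k(G)\leq\rho$ has a balanced $\mathbf{D_\rho^k}$-separator, i.e., there exist $k$ distinct vertices $v_1,\dots,v_k$ such that every connected component of $G[V\setminus \bigcup_{j=1}^k D_\rho(v_j,G)]$ has at most $|V|/2$ vertices.
   Context: Graphs are finite, connected, unweighted, undirected and simple; $d_G$ is the shortest-path distance, $D_r(v,G)=\{u: d_G(u,v)\le r\}$, and $G[S]$ is the subgraph induced by $S$. A tree-decomposition of $G=(V,E)$ is a pair $(\{X_i\mid i\in I\},T=(I,F))$ with $T$ a tree and bags $X_i\subseteq V$ such that (1) $\bigcup_i X_i=V$; (2) every edge lies in some bag; (3) for each $v\in V$ the nodes $i$ with $v\in X_i$ induce a connected subtree of $T$. The $k$-breadth of a tree-decomposition is the minimum integer $r$ such that each bag $X_i$ is covered by at most $k$ disks of $G$ of radius $r$, i.e., there are vertices $v^i_1,\dots,v^i_k$ of $G$ with $X_i\subseteq D_r(v^i_1,G)\cup\dots\cup D_r(v^i_k,G)$. The $k$-tree-breadth $\mathrm{tb}_k(G)$ is the minimum $k$-breadth over all tree-decompositions of $G$. *)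

theory Defs
  imports Complex_Main
begin

definition simple_graph :: "'a set \<Rightarrow> ('a \<times> 'a) set \<Rightarrow> bool" where
  "simple_graph V E \<longleftrightarrow> finite V \<and> E \<subseteq> V \<times> V \<and> sym E \<and> irrefl E"

definition connected_graph :: "'a set \<Rightarrow> ('a \<times> 'a) set \<Rightarrow> bool" where
  "connected_graph V E \<longleftrightarrow> V \<noteq> {} \<and> (\<forall>u\<in>V. \<forall>v\<in>V. (u, v) \<in> E\<^sup>*)"

definition gdist :: "('a \<times> 'a) set \<Rightarrow> 'a \<Rightarrow> 'a \<Rightarrow> nat" where
  "gdist E u v = (LEAST n. (u, v) \<in> E ^^ n)"

definition disk :: "'a set \<Rightarrow> ('a \<times> 'a) set \<Rightarrow> nat \<Rightarrow> 'a \<Rightarrow> 'a set" where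
  "disk V E r v = {u \<in> V. gdist E u v \<le> r}"

definition induced_edges :: "('a \<times> 'a) set \<Rightarrow> 'a set \<Rightarrow> ('a \<times> 'a) set" where
  "induced_edges E S = E \<inter> (S \<times> S)"

definition components :: "'a set \<Rightarrow> ('a \<times> 'a) set \<Rightarrow> 'a set set" where
  "components S E = {{y \<in> S. (x, y) \<in> (induced_edges E S)\<^sup>*} | x. x \<in> S}"

text \<open>A tree on node set I with (symmetric) edge relation F: a nonempty finite connected
  graph in which removing any edge disconnects its endpoints (minimally connected).\<close>
definition is_tree :: "'b set \<Rightarrow> ('b \<times> 'b) set \<Rightarrow> bool" where
  "is_tree I F \<longleftrightarrow> simple_graph I F \<and> connected_graph I F \<and>
     (\<forall>(i, j) \<in> F. (i, j) \<notin> (F - {(i, j), (j, i)})\<^sup>*)"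

text \<open>Tree-decomposition (X_i)_{i in I} with tree T = (I, F). Nodes are natural numbers
  (every finite tree can be relabelled this way).\<close>
definition tree_decomp :: "'a set \<Rightarrow> ('a \<times> 'a) set \<Rightarrow> nat set \<Rightarrow> (nat \<times> nat) set
    \<Rightarrow> (nat \<Rightarrow> 'a set) \<Rightarrow> bool" where
  "tree_decomp V E I F X \<longleftrightarrow> is_tree I F \<and> (\<forall>i\<in>I. X i \<subseteq> V) \<and>
     (\<Union>i\<in>I. X i) = V \<and>
     (\<forall>(u, v) \<in> E. \<exists>i\<in>I. u \<in> X i \<and> v \<in> X i) \<and>
     (\<forall>v\<in>V. connected_graph {i \<in> I. v \<in> X i} (induced_edges F {i \<in> I. v \<in> X i}))"

definition k_breadth :: "'a set \<Rightarrow> ('a \<times> 'a) set \<Rightarrow> nat \<Rightarrow> nat set \<Rightarrow> (nat \<Rightarrow> 'a set) \<Rightarrow> nat" where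
  "k_breadth V E k I X = (LEAST r. \<forall>i\<in>I. \<exists>vs. length vs = k \<and> set vs \<subseteq> V \<and>
       X i \<subseteq> (\<Union>v\<in>set vs. disk V E r v))"

definition tree_breadth :: "nat \<Rightarrow> 'a set \<Rightarrow> ('a \<times> 'a) set \<Rightarrow> nat" where
  "tree_breadth k V E = (LEAST r. \<exists>I F X. tree_decomp V E I F X \<and> k_breadth V E k I X = r)"

end

theory Submission
  imports Defs
begin

definition Rr :: "nat set \<Rightarrow> (nat \<times> nat) set \<Rightarrow> nat \<Rightarrow> (nat \<times> nat) set" where
  "Rr I F i = F \<inter> ((I - {i}) \<times> (I - {i}))"

lemma sym_rt: "sym r \<Longrightarrow> (a,b) \<in> r\<^sup>* \<Longrightarrow> (b,a) \<in> r\<^sup>*"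
  by (meson sym_rtrancl symD)

locale TD =
  fixes V :: "'a set" and E :: "('a \<times> 'a) set" and I :: "nat set" and F :: "(nat \<times> nat) set"
    and X :: "nat \<Rightarrow> 'a set"
  assumes sg: "simple_graph V E" and td: "tree_decomp V E I F X"
begin

lemma finV: "finite V" using sg by (auto simp: simple_graph_def)
lemma symE: "sym E" using sg by (auto simp: simple_graph_def)
lemma EV: "E \<subseteq> V \<times> V" using sg by (auto simp: simple_graph_def)
lemma tree: "is_tree I F" using td by (auto simp: tree_decomp_def)
lemma finI: "finite I" using tree by (auto simp: is_tree_def simple_graph_def)
lemma FI: "F \<subseteq> I \<times> I" using tree by (auto simp: is_tree_def simple_graph_def)
lemma symF: "sym F" using tree by (auto simp: is_tree_def simple_graph_def)
lemma Ine: "I \<noteq> {}" using tree by (auto simp: is_tree_def connected_graph_def)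
lemma conI: "u \<in> I \<Longrightarrow> v \<in> I \<Longrightarrow> (u,v) \<in> F\<^sup>*" using tree by (auto simp: is_tree_def connected_graph_def)
lemma treecond: assumes "(i,j) \<in> F" shows "(i,j) \<notin> (F - {(i,j),(j,i)})\<^sup>*"
proof -
  have "\<forall>x\<in>F. case x of (i, j) \<Rightarrow> (i, j) \<notin> (F - {(i, j), (j, i)})\<^sup>*"
    using tree unfolding is_tree_def by blast
  from this assms have "case (i,j) of (i, j) \<Rightarrow> (i, j) \<notin> (F - {(i, j), (j, i)})\<^sup>*"
    by (rule bspec)
  then show ?thesis by simp
qed
lemma XV: "i \<in> I \<Longrightarrow> X i \<subseteq> V" using td by (auto simp: tree_decomp_def)
lemma cover: "v \<in> V \<Longrightarrow> \<exists>i\<in>I. v \<in> X i" using td by (auto simp: tree_decomp_def)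
lemma edge: "(u,v) \<in> E \<Longrightarrow> \<exists>i\<in>I. u \<in> X i \<and> v \<in> X i" using td by (auto simp: tree_decomp_def)
lemma subtree: "v \<in> V \<Longrightarrow> l \<in> I \<Longrightarrow> v \<in> X l \<Longrightarrow> l' \<in> I \<Longrightarrow> v \<in> X l'
   \<Longrightarrow> (l,l') \<in> (induced_edges F {m\<in>I. v \<in> X m})\<^sup>*"
  using td unfolding tree_decomp_def connected_graph_def by auto

lemma Tconn:
  assumes "v \<in> V" "v \<notin> X i" "l\<in>I" "v \<in> X l" "l'\<in>I" "v \<in> X l'"
  shows "(l,l') \<in> (Rr I F i)\<^sup>*"
proof -
  have "induced_edges F {m\<in>I. v \<in> X m} \<subseteq> Rr I F i"
    using assms(2) unfolding induced_edges_def Rr_def by auto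
  then show ?thesis using subtree[OF assms(1,3,4,5,6)] rtrancl_mono by blast
qed

lemma Rr_not_i: "(a,b) \<in> (Rr I F i)\<^sup>* \<Longrightarrow> a \<noteq> i \<Longrightarrow> b \<noteq> i"
  by (erule rtranclE) (auto simp: Rr_def)

lemma Rr_in_I: "(a,b) \<in> (Rr I F i)\<^sup>* \<Longrightarrow> a \<in> I \<Longrightarrow> b \<in> I"
  by (erule rtranclE) (auto simp: Rr_def)

lemma Rr_sym: assumes "(a,b) \<in> (Rr I F i)\<^sup>*" shows "(b,a) \<in> (Rr I F i)\<^sup>*"
proof -
  have s: "sym (Rr I F i)" using symF unfolding sym_def Rr_def by blast
  show ?thesis by (rule sym_rt[OF s assms])
qed

lemma comp_path:
  assumes "(u,w) \<in> (induced_edges E (V - X i))\<^sup>*" "u \<in> V - X i"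
  shows "\<forall>l\<in>I. \<forall>l'\<in>I. u \<in> X l \<longrightarrow> w \<in> X l' \<longrightarrow> (l,l') \<in> (Rr I F i)\<^sup>*"
  using assms(1)
proof (induction rule: rtrancl_induct)
  case base then show ?case using Tconn assms(2) by auto
next
  case (step y z)
  from step.hyps(2) have yz: "(y,z) \<in> E" "y \<in> V - X i" "z \<in> V - X i"
    by (auto simp: induced_edges_def)
  obtain m where m: "m\<in>I" "y \<in> X m" "z \<in> X m" using edge yz(1) by blast
  show ?case
  proof (intro ballI impI)
    fix l l' assume a: "l\<in>I" "l'\<in>I" "u \<in> X l" "z \<in> X l'"
    then have "(l,m) \<in> (Rr I F i)\<^sup>*" using step.IH m by blast
    moreover have "(m,l') \<in> (Rr I F i)\<^sup>*" using Tconn yz m a by blast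
    ultimately show "(l,l') \<in> (Rr I F i)\<^sup>*" by (rule rtrancl_trans)
  qed
qed

lemma neighbor:
  assumes "(a,x) \<in> F\<^sup>*" "a \<in> I" "a \<noteq> i"
  shows "(a,x) \<in> (Rr I F i)\<^sup>* \<or> (\<exists>j. (a,j) \<in> (Rr I F i)\<^sup>* \<and> (j,i) \<in> F)"
  using assms(1)
proof (induction rule: rtrancl_induct)
  case base show ?case by simp
next
  case (step x y)
  show ?case
  proof (cases "(a,x) \<in> (Rr I F i)\<^sup>*")
    case True
    show ?thesis
    proof (cases "y = i")
      case True with \<open>(a,x) \<in> (Rr I F i)\<^sup>*\<close> step.hyps(2) show ?thesis by blast
    next
      case False
      have "x \<noteq> i" by (rule Rr_not_i[OF True assms(3)])
      have "x \<in> I" "y \<in> I" using step.hyps(2) FI by auto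
      then have "(x,y) \<in> Rr I F i" using step.hyps(2) False \<open>x\<noteq>i\<close> by (auto simp: Rr_def)
      with True have "(a,y) \<in> (Rr I F i)\<^sup>*" by (rule rtrancl.rtrancl_into_rtrancl)
      then show ?thesis by blast
    qed
  next
    case False then show ?thesis using step.IH by blast
  qed
qed

end

locale TDnb = TD +
  assumes nb: "\<forall>i\<in>I. \<exists>C\<in>components (V - X i) E. card V < 2 * card C"
begin

definition "Cc i = (SOME C. C \<in> components (V - X i) E \<and> card V < 2 * card C)"
definition "W i = {l\<in>I. X l \<inter> Cc i \<noteq> {}}"
definition "D i = {x. \<exists>l\<in>W i. (l,x) \<in> (Rr I F i)\<^sup>*}"

lemma Cc: "i\<in>I \<Longrightarrow> Cc i \<in> components (V - X i) E \<and> card V < 2 * card (Cc i)"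
proof -
  assume "i\<in>I"
  then have "\<exists>C. C \<in> components (V - X i) E \<and> card V < 2 * card C" using nb by blast
  then show ?thesis unfolding Cc_def by (rule someI_ex)
qed

lemma Cc_sub: assumes "i\<in>I" shows "Cc i \<subseteq> V - X i"
proof -
  have "Cc i \<in> components (V - X i) E" using Cc[OF assms] by blast
  then obtain x where "Cc i = {y\<in>V - X i. (x,y) \<in> (induced_edges E (V-X i))\<^sup>*}"
    unfolding components_def by blast
  then show ?thesis by blast
qed

lemma Cc_conn:
  assumes "i\<in>I" "u \<in> Cc i" "u' \<in> Cc i"
  shows "(u,u') \<in> (induced_edges E (V - X i))\<^sup>*"
proof -
  have "Cc i \<in> components (V - X i) E" using Cc[OF assms(1)] by blast
  then obtain x where x: "Cc i = {y\<in>V - X i. (x,y) \<in> (induced_edges E (V-X i))\<^sup>*}"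
    unfolding components_def by blast
  have s: "sym (induced_edges E (V-X i))" using symE unfolding sym_def induced_edges_def by blast
  have xu: "(x,u) \<in> (induced_edges E (V-X i))\<^sup>*" using assms(2) unfolding x by blast
  have xu': "(x,u') \<in> (induced_edges E (V-X i))\<^sup>*" using assms(3) unfolding x by blast
  have "(u,x) \<in> (induced_edges E (V-X i))\<^sup>*" by (rule sym_rt[OF s xu])
  then show ?thesis using xu' by (rule rtrancl_trans)
qed

lemma Cc_inter: "i\<in>I \<Longrightarrow> j\<in>I \<Longrightarrow> Cc i \<inter> Cc j \<noteq> {}"
proof
  assume a: "i\<in>I" "j\<in>I" "Cc i \<inter> Cc j = {}"
  have "Cc i \<subseteq> V" "Cc j \<subseteq> V" using Cc_sub a by blast+
  then have f: "finite (Cc i)" "finite (Cc j)" using finV finite_subset by auto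
  have "card (Cc i \<union> Cc j) = card (Cc i) + card (Cc j)" using card_Un_disjoint f a(3) by blast
  moreover have "Cc i \<union> Cc j \<subseteq> V" using Cc_sub a by blast
  then have "card (Cc i \<union> Cc j) \<le> card V" using card_mono finV by blast
  moreover have "card V < 2 * card (Cc i)" "card V < 2 * card (Cc j)" using Cc a by auto
  ultimately show False by linarith
qed

lemma W_ne: assumes "i\<in>I" shows "W i \<noteq> {}"
proof -
  have "card V < 2 * card (Cc i)" using Cc[OF assms] by blast
  then have "Cc i \<noteq> {}" by (metis card.empty mult_0_right not_less0)
  then obtain v where "v \<in> Cc i" by blast
  then have "v \<in> V" using Cc_sub assms by blast
  then obtain l where "l \<in> I" "v \<in> X l" using cover by blast
  then show ?thesis using \<open>v \<in> Cc i\<close> unfolding W_def by blast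
qed

lemma W_I: "W i \<subseteq> I" unfolding W_def by auto

lemma W_noti: "i\<in>I \<Longrightarrow> i \<notin> W i" using Cc_sub unfolding W_def by blast

lemma W_class:
  assumes "i\<in>I" "l\<in>W i" "l'\<in>W i"
  shows "(l,l') \<in> (Rr I F i)\<^sup>*"
proof -
  obtain u where u: "u \<in> X l" "u \<in> Cc i" using assms(2) unfolding W_def by blast
  obtain u' where u': "u' \<in> X l'" "u' \<in> Cc i" using assms(3) unfolding W_def by blast
  have "(u,u') \<in> (induced_edges E (V - X i))\<^sup>*" using Cc_conn assms u u' by blast
  moreover have "u \<in> V - X i" using Cc_sub assms u by blast
  ultimately show ?thesis using comp_path u u' assms W_I by blast
qed

lemma D_closed: "x \<in> D i \<Longrightarrow> (x,y) \<in> (Rr I F i)\<^sup>* \<Longrightarrow> y \<in> D i"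
  unfolding D_def by (auto intro: rtrancl_trans)

lemma W_D: "W i \<subseteq> D i" unfolding D_def by auto

lemma D_class:
  assumes "i\<in>I" "x\<in>D i" "y\<in>D i"
  shows "(x,y) \<in> (Rr I F i)\<^sup>*"
proof -
  obtain l where l: "l \<in> W i" "(l,x) \<in> (Rr I F i)\<^sup>*" using assms(2) unfolding D_def by blast
  obtain l' where l': "l' \<in> W i" "(l',y) \<in> (Rr I F i)\<^sup>*" using assms(3) unfolding D_def by blast
  have "(x,l) \<in> (Rr I F i)\<^sup>*" using Rr_sym l by blast
  moreover have "(l,l') \<in> (Rr I F i)\<^sup>*" using W_class assms l l' by blast
  ultimately have "(x,l') \<in> (Rr I F i)\<^sup>*" by (rule rtrancl_trans)
  then show ?thesis using l'(2) by (rule rtrancl_trans)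
qed

lemma D_noti: "i\<in>I \<Longrightarrow> i \<notin> D i"
  unfolding D_def using W_noti Rr_not_i by blast

lemma D_I: "D i \<subseteq> I"
  unfolding D_def using W_I Rr_in_I by blast

lemma D_nb: assumes "i\<in>I" shows "\<exists>j. j \<in> D i \<and> (j,i) \<in> F"
proof -
  obtain l where l: "l \<in> W i" using W_ne assms by blast
  have lI: "l \<in> I" "l \<noteq> i" using l W_I W_noti assms by auto
  have "(l,i) \<in> F\<^sup>*" using conI lI assms by blast
  from neighbor[OF this lI] obtain j where "(l,j) \<in> (Rr I F i)\<^sup>*" "(j,i) \<in> F"
    using Rr_not_i lI by blast
  then show ?thesis using l unfolding D_def by blast
qed

theorem contra: False
proof -
  define m where "m = Min ((\<lambda>i. card (D i)) ` I)"
  have "m \<in> (\<lambda>i. card (D i)) ` I" unfolding m_def using finI Ine by (intro Min_in) auto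
  then obtain i where i: "i \<in> I" "card (D i) = m" by blast
  have imin: "\<And>j. j\<in>I \<Longrightarrow> card (D i) \<le> card (D j)" unfolding i(2) m_def using finI by auto
  obtain j where j: "j \<in> D i" "(j,i) \<in> F" using D_nb i by blast
  have jI: "j\<in>I" "j \<noteq> i" using j D_I D_noti i by auto
  show False
  proof (cases "i \<in> D j")
    case True
    obtain v where v: "v \<in> Cc i" "v \<in> Cc j" using Cc_inter i jI by blast
    have "v \<in> V" using Cc_sub v i by blast
    then obtain l where l: "l\<in>I" "v \<in> X l" using cover by blast
    have "l \<in> D i" "l \<in> D j" using W_D l v unfolding W_def by blast+
    then have p1: "(j,l) \<in> (Rr I F i)\<^sup>*" and p2: "(l,i) \<in> (Rr I F j)\<^sup>*"
      using D_class i jI j True by blast+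
    have "Rr I F i \<subseteq> F - {(j,i),(i,j)}" "Rr I F j \<subseteq> F - {(j,i),(i,j)}" unfolding Rr_def by auto
    then have "(j,l) \<in> (F - {(j,i),(i,j)})\<^sup>*" "(l,i) \<in> (F - {(j,i),(i,j)})\<^sup>*"
      using p1 p2 rtrancl_mono by blast+
    then have "(j,i) \<in> (F - {(j,i),(i,j)})\<^sup>*" by (rule rtrancl_trans)
    then show False using treecond[OF j(2)] by blast
  next
    case False
    have key: "\<And>a b. (a,b) \<in> (Rr I F j)\<^sup>* \<Longrightarrow> a \<in> D j \<Longrightarrow> (a,b) \<in> (Rr I F i)\<^sup>*"
    proof -
      fix a b assume "(a,b) \<in> (Rr I F j)\<^sup>*" "a \<in> D j"
      then show "(a,b) \<in> (Rr I F i)\<^sup>*"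
      proof (induction rule: rtrancl_induct)
        case base then show ?case by simp
      next
        case (step y z)
        have "y \<in> D j" using D_closed step by blast
        moreover have "z \<in> D j" using D_closed step by (meson rtrancl.rtrancl_into_rtrancl)
        ultimately have "(y,z) \<in> Rr I F i" using False step.hyps(2) unfolding Rr_def by auto
        then show ?case using step by (meson rtrancl.rtrancl_into_rtrancl)
      qed
    qed
    have sub: "D j \<subseteq> D i"
    proof
      fix x assume x: "x \<in> D j"
      obtain j' where j': "j' \<in> D j" "(j',j) \<in> F" using D_nb jI by blast
      have "(j',x) \<in> (Rr I F j)\<^sup>*" using D_class jI j' x by blast
      then have "(j',x) \<in> (Rr I F i)\<^sup>*" using key j' by blast
      moreover have "(j,j') \<in> Rr I F i"
        using j' False jI symF D_I unfolding Rr_def sym_def by auto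
      ultimately have "(j,x) \<in> (Rr I F i)\<^sup>*" by (meson converse_rtrancl_into_rtrancl)
      then show "x \<in> D i" using D_closed j by blast
    qed
    have "j \<notin> D j" using D_noti jI by blast
    then have "D j \<subset> D i" using sub j by blast
    moreover have "finite (D i)" using D_I finI finite_subset by blast
    ultimately have "card (D j) < card (D i)" by (rule psubset_card_mono[rotated])
    then show False using imin[OF jI(1)] by linarith
  qed
qed

end

lemma centroid:
  assumes "simple_graph V E" "tree_decomp V E I F X"
  shows "\<exists>i\<in>I. \<forall>C\<in>components (V - X i) E. 2 * card C \<le> card V"
proof (rule ccontr)
  assume "\<not> ?thesis"
  then have "\<forall>i\<in>I. \<exists>C\<in>components (V - X i) E. card V < 2 * card C" by (auto simp: not_le)
  then interpret TDnb V E I F X using assms by unfold_locales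
  show False by (rule contra)
qed

lemma disk_mono: "r \<le> s \<Longrightarrow> disk V E r v \<subseteq> disk V E s v"
  unfolding disk_def by auto

theorem lemma10:
  fixes V :: "'a set" and E :: "('a \<times> 'a) set" and k \<rho> :: nat
  assumes "k \<ge> 1"
    and "simple_graph V E" and "connected_graph V E"
    and "card V \<ge> k"
    and "tree_breadth k V E \<le> \<rho>"
  shows "\<exists>vs. length vs = k \<and> distinct vs \<and> set vs \<subseteq> V \<and>
           (\<forall>C \<in> components (V - (\<Union>v\<in>set vs. disk V E \<rho> v)) E.
              real (card C) \<le> real (card V) / 2)"
proof -
  have finV: "finite V" using assms(2) by (auto simp: simple_graph_def)
  have EV: "E \<subseteq> V \<times> V" using assms(2) by (auto simp: simple_graph_def)
  have Vne: "V \<noteq> {}" using assms(3) by (auto simp: connected_graph_def)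
  have td0: "tree_decomp V E {0} {} (\<lambda>_. V)"
    unfolding tree_decomp_def is_tree_def simple_graph_def connected_graph_def induced_edges_def
    using EV Vne by (auto simp: sym_def irrefl_def)
  have "\<exists>I F X. tree_decomp V E I F X \<and> k_breadth V E k I X = tree_breadth k V E"
    unfolding tree_breadth_def by (rule LeastI_ex) (use td0 in blast)
  then obtain I F X where td: "tree_decomp V E I F X" and kb: "k_breadth V E k I X = tree_breadth k V E"
    by blast
  obtain v0 where v0: "v0 \<in> V" using Vne by blast
  define r0 where "r0 = Max ((\<lambda>(u,v). gdist E u v) ` (V \<times> V))"
  have "\<forall>i\<in>I. \<exists>vs. length vs = k \<and> set vs \<subseteq> V \<and> X i \<subseteq> (\<Union>v\<in>set vs. disk V E r0 v)"
  proof
    fix i assume "i \<in> I"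
    then have XV: "X i \<subseteq> V" using td by (auto simp: tree_decomp_def)
    have "V \<subseteq> disk V E r0 v0"
    proof
      fix u assume "u \<in> V"
      then have "gdist E u v0 \<le> r0" unfolding r0_def using finV v0
        by (intro Max_ge) auto
      then show "u \<in> disk V E r0 v0" using \<open>u\<in>V\<close> unfolding disk_def by auto
    qed
    moreover have "set (replicate k v0) = {v0}" using assms(1) by auto
    ultimately show "\<exists>vs. length vs = k \<and> set vs \<subseteq> V \<and> X i \<subseteq> (\<Union>v\<in>set vs. disk V E r0 v)"
      using XV v0 by (intro exI[of _ "replicate k v0"]) auto
  qed
  then have "\<forall>i\<in>I. \<exists>vs. length vs = k \<and> set vs \<subseteq> V \<and>
       X i \<subseteq> (\<Union>v\<in>set vs. disk V E (k_breadth V E k I X) v)"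
    unfolding k_breadth_def by (rule LeastI)
  note allb = this
  obtain i where i: "i \<in> I" and bal: "\<forall>C\<in>components (V - X i) E. 2 * card C \<le> card V"
    using centroid[OF assms(2) td] by blast
  from allb i have "\<exists>vs. length vs = k \<and> set vs \<subseteq> V \<and>
       X i \<subseteq> (\<Union>v\<in>set vs. disk V E (k_breadth V E k I X) v)" by (rule bspec)
  then obtain vs where vs: "length vs = k" "set vs \<subseteq> V"
    "X i \<subseteq> (\<Union>v\<in>set vs. disk V E (k_breadth V E k I X) v)" by blast
  have kr: "k_breadth V E k I X \<le> \<rho>" using kb assms(5) by simp
  have "(\<Union>v\<in>set vs. disk V E (k_breadth V E k I X) v) \<subseteq> (\<Union>v\<in>set vs. disk V E \<rho> v)"
    using disk_mono[OF kr] by (rule UN_mono[OF order_refl])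
  then have "X i \<subseteq> (\<Union>v\<in>set vs. disk V E \<rho> v)" using vs(3) by (rule subset_trans[rotated])
  define A where "A = set vs"
  have cA: "card A \<le> k" using card_length vs(1) A_def by metis
  have "card (V - A) = card V - card A" using card_Diff_subset vs(2) A_def finV
    by (metis List.finite_set)
  then have "k - card A \<le> card (V - A)" using assms(4) by linarith
  then obtain B where B: "B \<subseteq> V - A" "card B = k - card A" "finite B"
    using obtain_subset_with_card_n by metis
  have cT: "card (A \<union> B) = k" using B cA card_Un_disjoint[of A B] A_def by auto
  obtain ws where ws: "set ws = A \<union> B" "distinct ws" using finite_distinct_list B(3) A_def
    by (metis List.finite_set finite_Un)
  have lws: "length ws = k" using distinct_card ws cT by metis
  have wsV: "set ws \<subseteq> V" using ws B vs(2) A_def by auto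
  have Xsub: "X i \<subseteq> (\<Union>v\<in>set ws. disk V E \<rho> v)"
    using \<open>X i \<subseteq> (\<Union>v\<in>set vs. disk V E \<rho> v)\<close> ws A_def by auto
  define S' where "S' = V - (\<Union>v\<in>set ws. disk V E \<rho> v)"
  define S where "S = V - X i"
  have SS: "S' \<subseteq> S" using Xsub unfolding S_def S'_def by auto
  have "\<forall>C \<in> components S' E. real (card C) \<le> real (card V) / 2"
  proof
    fix C assume "C \<in> components S' E"
    then obtain x where x: "x \<in> S'" "C = {y\<in>S'. (x,y) \<in> (induced_edges E S')\<^sup>*}"
      unfolding components_def by auto
    define C' where "C' = {y\<in>S. (x,y) \<in> (induced_edges E S)\<^sup>*}"
    have "C' \<in> components S E" unfolding components_def C'_def using x SS by auto
    then have "2 * card C' \<le> card V" using bal unfolding S_def by blast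
    moreover have "induced_edges E S' \<subseteq> induced_edges E S" using SS unfolding induced_edges_def by auto
    then have "C \<subseteq> C'" unfolding x C'_def using SS rtrancl_mono by blast
    moreover have "finite C'" unfolding C'_def S_def using finV by auto
    ultimately have "2 * card C \<le> card V" using card_mono by (meson le_trans mult_le_mono2)
    then show "real (card C) \<le> real (card V) / 2" by linarith
  qed
  then show ?thesis unfolding S'_def using lws ws(2) wsV by (intro exI[of _ ws]) simp
qed

end
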